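(* There is an $\omega$-language that is PPBA-recognizable but not RPBA-recognizable.
   Context: A Parikh automaton of dimension $d$ is $\mathcal{A}=(Q,\Sigma,q_0,\Delta,F,C)$ with finite $Q$, $q_0\in Q$, $F\subseteq Q$, finite $\Delta\subseteq Q\times\Sigma\times\mathbb{N}^d\times Q$ and semi-linear $C\subseteq\mathbb{N}^d$ (a finite union of sets $\{b_0+\sum_{j=1}^\ell b_jz_j\mid z_j\in\mathbb{N}\}$, $b_j\in\mathbb{N}^d$). A run on an infinite word $\alpha$ is $r_1r_2\cdots$ with $r_i=(p_{i-1},\alpha_i,\mathbf{v}_i,p_i)\in\Delta$, $p_0=q_0$, and $\rho(r_1\cdots r_i)=\sum_{k\le i}\mathbf{v}_k$. For an RPBA (reachability Parikh–Büchi automaton) the run is accepting if there is $i\ge1$ with $p_i\in F$ and $\rho(r_1\cdots r_i)\in C$, and there are infinitely many $j$ with $p_j\in F$. For a PPBA (prefix Parikh–Büchi automaton) the run is accepting if there are infinitely many $i\ge1$ with $p_i\in F$ and $\rho(r_1\cdots r_i)\in C$. An $\omega$-language is X-recognizable if it equals the set of infinite words with an accepting run of some automaton of type X. *)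

theory Defs
  imports Main
begin

text \<open>Vectors in N^d are represented as functions nat => nat vanishing from index d on.\<close>
definition vecs :: "nat \<Rightarrow> (nat \<Rightarrow> nat) set" where
  "vecs d = {v. \<forall>i\<ge>d. v i = 0}"

definition linear_set :: "(nat \<Rightarrow> nat) \<Rightarrow> (nat \<Rightarrow> nat) list \<Rightarrow> (nat \<Rightarrow> nat) set" where
  "linear_set b0 B = {(\<lambda>i. b0 i + (\<Sum>j<length B. z j * (B ! j) i)) | z. True}"

definition semilinear :: "nat \<Rightarrow> (nat \<Rightarrow> nat) set \<Rightarrow> bool" where
  "semilinear d C \<longleftrightarrow> (\<exists>S. finite S \<and> (\<forall>(b0, B) \<in> S. b0 \<in> vecs d \<and> set B \<subseteq> vecs d)
      \<and> C = (\<Union>(b0, B) \<in> S. linear_set b0 B))"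

record 'a parikh_aut =
  states :: "nat set"
  alph :: "'a set"
  init :: nat
  trans :: "(nat \<times> 'a \<times> (nat \<Rightarrow> nat) \<times> nat) set"
  final :: "nat set"
  constr :: "(nat \<Rightarrow> nat) set"
  dim :: nat

definition wf_PA :: "'a parikh_aut \<Rightarrow> bool" where
  "wf_PA A \<longleftrightarrow> finite (states A) \<and> finite (alph A) \<and> init A \<in> states A
     \<and> final A \<subseteq> states A \<and> finite (trans A)
     \<and> trans A \<subseteq> states A \<times> alph A \<times> vecs (dim A) \<times> states A
     \<and> semilinear (dim A) (constr A)"

definition t_src :: "nat \<times> 'a \<times> (nat \<Rightarrow> nat) \<times> nat \<Rightarrow> nat" where
  "t_src t = fst t"
definition t_letter :: "nat \<times> 'a \<times> (nat \<Rightarrow> nat) \<times> nat \<Rightarrow> 'a" where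
  "t_letter t = fst (snd t)"
definition t_vec :: "nat \<times> 'a \<times> (nat \<Rightarrow> nat) \<times> nat \<Rightarrow> nat \<Rightarrow> nat" where
  "t_vec t = fst (snd (snd t))"
definition t_tgt :: "nat \<times> 'a \<times> (nat \<Rightarrow> nat) \<times> nat \<Rightarrow> nat" where
  "t_tgt t = snd (snd (snd t))"

text \<open>A run on the infinite word alpha (0-indexed: alpha n is the (n+1)-th letter):
  r n is the (n+1)-th transition r_{n+1}; so p_{n+1} = t_tgt (r n).\<close>
definition is_run :: "'a parikh_aut \<Rightarrow> (nat \<Rightarrow> 'a) \<Rightarrow> (nat \<Rightarrow> nat \<times> 'a \<times> (nat \<Rightarrow> nat) \<times> nat) \<Rightarrow> bool" where
  "is_run A \<alpha> r \<longleftrightarrow> t_src (r 0) = init A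
     \<and> (\<forall>n. r n \<in> trans A \<and> t_letter (r n) = \<alpha> n \<and> t_tgt (r n) = t_src (r (Suc n)))"

definition rho :: "(nat \<Rightarrow> nat \<times> 'a \<times> (nat \<Rightarrow> nat) \<times> nat) \<Rightarrow> nat \<Rightarrow> nat \<Rightarrow> nat" where
  "rho r n = (\<lambda>j. \<Sum>k\<le>n. t_vec (r k) j)"

definition RPBA_accepting :: "'a parikh_aut \<Rightarrow> (nat \<Rightarrow> nat \<times> 'a \<times> (nat \<Rightarrow> nat) \<times> nat) \<Rightarrow> bool" where
  "RPBA_accepting A r \<longleftrightarrow>
     (\<exists>n. t_tgt (r n) \<in> final A \<and> rho r n \<in> constr A)
     \<and> (\<exists>\<^sub>\<infinity>n. t_tgt (r n) \<in> final A)"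

definition PPBA_accepting :: "'a parikh_aut \<Rightarrow> (nat \<Rightarrow> nat \<times> 'a \<times> (nat \<Rightarrow> nat) \<times> nat) \<Rightarrow> bool" where
  "PPBA_accepting A r \<longleftrightarrow> (\<exists>\<^sub>\<infinity>n. t_tgt (r n) \<in> final A \<and> rho r n \<in> constr A)"

definition RPBA_lang :: "'a parikh_aut \<Rightarrow> (nat \<Rightarrow> 'a) set" where
  "RPBA_lang A = {\<alpha>. (\<forall>i. \<alpha> i \<in> alph A) \<and> (\<exists>r. is_run A \<alpha> r \<and> RPBA_accepting A r)}"

definition PPBA_lang :: "'a parikh_aut \<Rightarrow> (nat \<Rightarrow> 'a) set" where
  "PPBA_lang A = {\<alpha>. (\<forall>i. \<alpha> i \<in> alph A) \<and> (\<exists>r. is_run A \<alpha> r \<and> PPBA_accepting A r)}"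

definition RPBA_recognizable :: "'a set \<Rightarrow> (nat \<Rightarrow> 'a) set \<Rightarrow> bool" where
  "RPBA_recognizable \<Sigma> L \<longleftrightarrow> (\<exists>A. wf_PA A \<and> alph A = \<Sigma> \<and> RPBA_lang A = L)"

definition PPBA_recognizable :: "'a set \<Rightarrow> (nat \<Rightarrow> 'a) set \<Rightarrow> bool" where
  "PPBA_recognizable \<Sigma> L \<longleftrightarrow> (\<exists>A. wf_PA A \<and> alph A = \<Sigma> \<and> PPBA_lang A = L)"

end

theory Submission
  imports Defs "HOL-Library.Infinite_Set"
begin

definition sgn01 :: "nat \<Rightarrow> int" where "sgn01 a = (if a = 0 then 1 else -1)"
definition DD :: "(nat \<Rightarrow> nat) \<Rightarrow> nat \<Rightarrow> int" where "DD w n = (\<Sum>k<n. sgn01 (w k))"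
definition bal :: "(nat \<Rightarrow> nat) \<Rightarrow> nat \<Rightarrow> bool" where
  "bal w n \<longleftrightarrow> (\<Sum>k\<le>n. if w k = 0 then 1 else 0::nat) = (\<Sum>k\<le>n. if w k = 1 then 1 else 0)"
definition Lbal :: "(nat \<Rightarrow> nat) set" where
  "Lbal = {\<alpha>. (\<forall>i. \<alpha> i \<in> {0,1}) \<and> (\<exists>\<^sub>\<infinity>n. bal \<alpha> n)}"
definition per :: "nat \<Rightarrow> nat \<Rightarrow> nat" where "per N k = (if k mod (2*N) < N then 0 else 1)"

lemma aux_nat: "(K::nat) \<ge> 2*(m+1) \<Longrightarrow> K - 1 > m" by simp

lemma aux_step: "(r::nat) < 2*N \<Longrightarrow> (if r \<le> N then int r else int (2*N - r)) + (if r < N then 1 else -1)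
  = (if (if Suc r = 2*N then 0 else Suc r) \<le> N then int (if Suc r = 2*N then 0 else Suc r)
     else int (2*N - (if Suc r = 2*N then 0 else Suc r)))"
  by (cases "Suc r = 2*N"; cases "r < N"; cases "r = N"; simp add: of_nat_diff)

lemma DD_Suc: "DD w (Suc n) = DD w n + sgn01 (w n)"
  by (simp add: DD_def)

lemma bal_DD: assumes "\<forall>k. w k \<in> {0,1}" shows "bal w n \<longleftrightarrow> DD w (Suc n) = 0"
proof -
  have "int (\<Sum>k\<le>n. if w k = 0 then 1 else 0) - int (\<Sum>k\<le>n. if w k = 1 then 1 else 0)
        = (\<Sum>k\<le>n. sgn01 (w k))"
    unfolding of_nat_sum sum_subtractf[symmetric]
    apply (rule sum.cong, simp)
    using assms by (auto simp: sgn01_def)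
  also have "\<dots> = DD w (Suc n)" by (simp add: DD_def lessThan_Suc_atMost)
  finally show ?thesis unfolding bal_def by linarith
qed

lemma DD_per: "N > 0 \<Longrightarrow> DD (per N) n = (if n mod (2*N) \<le> N then int (n mod (2*N)) else int (2*N - n mod (2*N)))"
proof (induction n)
  case 0
  then show ?case by (simp add: DD_def)
next
  case (Suc n)
  have lt: "n mod (2*N) < 2*N" using Suc.prems by simp
    have sg: "sgn01 (per N n) = (if n mod (2*N) < N then 1 else -1)" by (simp add: per_def sgn01_def)
  show ?case
    unfolding DD_Suc Suc.IH[OF Suc.prems] sg mod_Suc
    using lt by (rule aux_step)
qed

lemma DD_per_nonneg: assumes "N > 0" shows "DD (per N) n \<ge> 0"
proof -
  have "n mod (2*N) < 2*N" using assms by simp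
  then show ?thesis using DD_per[OF assms, of n] by (auto split: if_splits)
qed

lemma per_in_Lbal: assumes "N > 0" shows "per N \<in> Lbal"
  unfolding Lbal_def
proof (intro CollectI conjI allI)
  show "per N i \<in> {0,1}" for i by (simp add: per_def)
  show "\<exists>\<^sub>\<infinity>n. bal (per N) n"
    unfolding INFM_nat
  proof
    fix m
    have "Suc (2*N*(m+1) - 1) = 2*N*(m+1)" using assms by simp
    moreover have "DD (per N) (2*N*(m+1)) = 0" using assms by (simp add: DD_per)
    ultimately have b: "bal (per N) (2*N*(m+1) - 1)"
      by (subst bal_DD) (auto simp: per_def)
    have "(m+1)*1 \<le> (m+1)*N" using assms by (intro mult_le_mono2) simp
    then have "2*N*(m+1) \<ge> 2*(m+1)" by (simp add: algebra_simps)
    hence "2*N*(m+1) - 1 > m" by (rule aux_nat)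
    with b show "\<exists>n>m. bal (per N) n" by blast
  qed
qed


definition ev :: "nat \<Rightarrow> nat \<Rightarrow> nat" where "ev a = (\<lambda>i. if i = a then 1 else 0)"
definition cvec :: "nat \<Rightarrow> nat" where "cvec = (\<lambda>i. if i < 2 then 1 else 0)"
definition Aut :: "nat parikh_aut" where
  "Aut = \<lparr>states = {0}, alph = {0,1}, init = 0, trans = {(0,0,ev 0,0),(0,1,ev 1,0)},
     final = {0}, constr = linear_set (\<lambda>_. 0) [cvec], dim = 2\<rparr>"
definition runA :: "(nat \<Rightarrow> nat) \<Rightarrow> nat \<Rightarrow> nat \<times> nat \<times> (nat \<Rightarrow> nat) \<times> nat" where
  "runA \<alpha> k = (0, \<alpha> k, ev (\<alpha> k), 0)"

lemma ev_vecs: "a < 2 \<Longrightarrow> ev a \<in> vecs 2"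
  by (simp add: vecs_def ev_def)

lemma cvec_vecs: "cvec \<in> vecs 2"
  by (simp add: vecs_def cvec_def)

lemma semi: "semilinear 2 (linear_set (\<lambda>_. 0) [cvec])"
  unfolding semilinear_def
proof (intro exI conjI)
  show "finite {((\<lambda>_. 0::nat), [cvec])}" by simp
  show "\<forall>(b0, B)\<in>{((\<lambda>_. 0::nat), [cvec])}. b0 \<in> vecs 2 \<and> set B \<subseteq> vecs 2"
    using cvec_vecs by (simp add: vecs_def)
  show "linear_set (\<lambda>_. 0) [cvec] = (\<Union>(b0, B)\<in>{((\<lambda>_. 0::nat), [cvec])}. linear_set b0 B)" by simp
qed

lemma wf_Aut: "wf_PA Aut"
  unfolding wf_PA_def
proof (intro conjI)
  show "parikh_aut.trans Aut \<subseteq> states Aut \<times> alph Aut \<times> vecs (dim Aut) \<times> states Aut"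
    using ev_vecs[of 0] ev_vecs[of 1] by (simp add: Aut_def)
  show "semilinear (dim Aut) (constr Aut)" using semi by (simp add: Aut_def)
qed (simp_all add: Aut_def)

lemma ls_iff: "v \<in> linear_set (\<lambda>_. 0) [cvec] \<longleftrightarrow> v 0 = v 1 \<and> (\<forall>i\<ge>2. v i = 0)"
proof
  assume "v \<in> linear_set (\<lambda>_. 0) [cvec]"
  then show "v 0 = v 1 \<and> (\<forall>i\<ge>2. v i = 0)" by (auto simp: linear_set_def cvec_def)
next
  assume h: "v 0 = v 1 \<and> (\<forall>i\<ge>2. v i = 0)"
  show "v \<in> linear_set (\<lambda>_. 0) [cvec]" unfolding linear_set_def mem_Collect_eq
  proof (intro exI conjI)
    show "v = (\<lambda>i. 0 + (\<Sum>j<length [cvec]. (\<lambda>_. v 0) j * ([cvec] ! j) i))"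
    proof (rule ext)
      fix i show "v i = 0 + (\<Sum>j<length [cvec]. (\<lambda>_. v 0) j * ([cvec] ! j) i)"
        using h by (cases "i < 2") (auto simp: cvec_def less_2_cases_iff)
    qed
  qed simp
qed

lemma rho_runA: assumes "\<forall>k. \<alpha> k \<in> {0,1}"
  shows "rho (runA \<alpha>) n \<in> linear_set (\<lambda>_. 0) [cvec] \<longleftrightarrow> bal \<alpha> n"
proof -
  have r: "rho (runA \<alpha>) n = (\<lambda>j. \<Sum>k\<le>n. if \<alpha> k = j then 1 else 0)"
    by (auto simp: rho_def runA_def t_vec_def ev_def intro!: ext sum.cong)
  have "(\<Sum>k\<le>n. if \<alpha> k = i then 1 else 0::nat) = 0" if "i \<ge> 2" for i
  proof -
    have "\<forall>k. \<alpha> k \<noteq> i"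
    proof
      fix k have "\<alpha> k \<in> {0,1}" using assms by blast
      then show "\<alpha> k \<noteq> i" using that by auto
    qed
    then show ?thesis by simp
  qed
  then show ?thesis unfolding ls_iff r bal_def by auto
qed

lemma run_is_runA: assumes "is_run Aut \<alpha> r" shows "r = runA \<alpha>"
proof
  fix k
  have "r k \<in> trans Aut" "t_letter (r k) = \<alpha> k" using assms by (auto simp: is_run_def)
  then show "r k = runA \<alpha> k" by (auto simp: Aut_def runA_def t_letter_def)
qed

lemma PPBA_Aut: "PPBA_lang Aut = Lbal"
proof
  show "PPBA_lang Aut \<subseteq> Lbal"
  proof
    fix \<alpha> assume "\<alpha> \<in> PPBA_lang Aut"
    then obtain r where l: "\<forall>i. \<alpha> i \<in> {0,1}" and run: "is_run Aut \<alpha> r" and acc: "PPBA_accepting Aut r"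
      by (auto simp: PPBA_lang_def Aut_def)
    have "r = runA \<alpha>" using run by (rule run_is_runA)
    have "\<exists>\<^sub>\<infinity>n. t_tgt (r n) \<in> final Aut \<and> rho r n \<in> constr Aut" using acc by (simp add: PPBA_accepting_def)
    then have "\<exists>\<^sub>\<infinity>n. bal \<alpha> n"
      by (rule INFM_mono) (use rho_runA[OF l] \<open>r = runA \<alpha>\<close> in \<open>auto simp: Aut_def\<close>)
    then show "\<alpha> \<in> Lbal" using l by (simp add: Lbal_def)
  qed
next
  show "Lbal \<subseteq> PPBA_lang Aut"
  proof
    fix \<alpha> assume "\<alpha> \<in> Lbal"
    then have l: "\<forall>i. \<alpha> i \<in> {0,1}" and inf: "\<exists>\<^sub>\<infinity>n. bal \<alpha> n" by (auto simp: Lbal_def)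
    have tr: "runA \<alpha> k \<in> trans Aut" for k
    proof -
      have "\<alpha> k = 0 \<or> \<alpha> k = 1" using l by auto
      then show ?thesis by (auto simp: Aut_def runA_def)
    qed
    have run: "is_run Aut \<alpha> (runA \<alpha>)"
      using tr by (auto simp: is_run_def Aut_def runA_def t_src_def t_tgt_def t_letter_def)
    have "PPBA_accepting Aut (runA \<alpha>)"
      unfolding PPBA_accepting_def
      using inf by (rule INFM_mono) (use rho_runA[OF l] in \<open>auto simp: Aut_def runA_def t_tgt_def\<close>)
    then show "\<alpha> \<in> PPBA_lang Aut" using run l by (auto simp: PPBA_lang_def Aut_def)
  qed
qed

lemma PPBA_rec: "PPBA_recognizable {0,1::nat} Lbal"
  unfolding PPBA_recognizable_def using wf_Aut PPBA_Aut by (auto simp: Aut_def)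


lemma not_RPBA: "\<not> RPBA_recognizable {0,1::nat} Lbal"
proof
  assume "RPBA_recognizable {0,1::nat} Lbal"
  then obtain A :: "nat parikh_aut" where wf: "wf_PA A" and al: "alph A = {0,1}" and lang: "RPBA_lang A = Lbal"
    unfolding RPBA_recognizable_def by blast
  define N where "N = card (states A) + 1"
  have N0: "N > 0" by (simp add: N_def)
  define \<alpha> where "\<alpha> = per N"
  have "\<alpha> \<in> RPBA_lang A" using lang per_in_Lbal[OF N0] \<alpha>_def by simp
  then obtain r where run: "is_run A \<alpha> r" and acc: "RPBA_accepting A r" unfolding RPBA_lang_def by blast
  from acc obtain n where nF: "t_tgt (r n) \<in> final A" and nC: "rho r n \<in> constr A"
    and inf: "\<exists>\<^sub>\<infinity>m. t_tgt (r m) \<in> final A"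
    unfolding RPBA_accepting_def by blast
  have finS: "finite (states A)" using wf by (simp add: wf_PA_def)
  have srcS: "t_src (r m) \<in> states A" for m
  proof -
    have "r m \<in> trans A" using run by (simp add: is_run_def)
    moreover have "trans A \<subseteq> states A \<times> alph A \<times> vecs (dim A) \<times> states A" using wf by (simp add: wf_PA_def)
    ultimately show ?thesis by (auto simp: t_src_def)
  qed
  define s where "s = 2*N*(n+1)"
  have "\<not> inj_on (\<lambda>m. t_src (r m)) {s..s+N}"
  proof
    assume inj: "inj_on (\<lambda>m. t_src (r m)) {s..s+N}"
    have "(\<lambda>m. t_src (r m)) ` {s..s+N} \<subseteq> states A" using srcS by blast
    then have "card {s..s+N} \<le> card (states A)"
      using card_inj_on_le[OF inj _ finS] by blast
    then show False by (simp add: N_def)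
  qed
  then obtain x y where xy: "x \<in> {s..s+N}" "y \<in> {s..s+N}" "x \<noteq> y" "t_src (r x) = t_src (r y)"
    unfolding inj_on_def by blast
  obtain i j where ij: "s \<le> i" "i < j" "j \<le> s+N" "t_src (r i) = t_src (r j)"
  proof (cases "x < y")
    case True then show ?thesis using that xy by auto
  next
    case False then have "y < x" using xy(3) by simp
    then show ?thesis using that[of y x] xy by auto
  qed
  define \<delta> where "\<delta> = j - i"
  have jd: "j - \<delta> = i" "\<delta> > 0" "\<delta> \<le> j" using ij by (auto simp: \<delta>_def)
  define \<alpha>2 where "\<alpha>2 = (\<lambda>k. if k < j then \<alpha> k else \<alpha> (k - \<delta>))"
  define r2 where "r2 = (\<lambda>k. if k < j then r k else r (k - \<delta>))"
  have run2: "is_run A \<alpha>2 r2"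
    unfolding is_run_def
  proof (intro conjI allI)
    show "t_src (r2 0) = init A" using run ij by (simp add: r2_def is_run_def)
    fix k
    show "r2 k \<in> trans A" using run by (simp add: r2_def is_run_def)
    show "t_letter (r2 k) = \<alpha>2 k" using run by (simp add: r2_def \<alpha>2_def is_run_def)
    show "t_tgt (r2 k) = t_src (r2 (Suc k))"
    proof (cases "Suc k < j")
      case True then show ?thesis using run by (simp add: r2_def is_run_def)
    next
      case False
      show ?thesis
      proof (cases "Suc k = j")
        case True
        then have "t_tgt (r2 k) = t_src (r j)" using run by (auto simp: r2_def is_run_def)
        also have "\<dots> = t_src (r i)" using ij by simp
        also have "\<dots> = t_src (r2 (Suc k))" using True jd by (simp add: r2_def)
        finally show ?thesis .
      next
        case False2: False
        then have kj: "k \<ge> j" using \<open>\<not> Suc k < j\<close> by simp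
        then have "Suc k - \<delta> = Suc (k - \<delta>)" using jd by simp
        then show ?thesis using run kj by (simp add: r2_def is_run_def)
      qed
    qed
  qed
  have "(n+1)*1 \<le> (n+1)*N" using N0 by (intro mult_le_mono2) simp
  then have "2*(n+1) \<le> s" by (simp add: s_def algebra_simps)
  then have ns: "n < j" using ij by simp
  have acc2: "RPBA_accepting A r2"
    unfolding RPBA_accepting_def
  proof
    have "rho r2 n = rho r n" unfolding rho_def using ns by (auto simp: r2_def intro!: ext sum.cong)
    moreover have "t_tgt (r2 n) = t_tgt (r n)" using ns by (simp add: r2_def)
    ultimately show "\<exists>n. t_tgt (r2 n) \<in> final A \<and> rho r2 n \<in> constr A" using nF nC by metis
    show "\<exists>\<^sub>\<infinity>m. t_tgt (r2 m) \<in> final A"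
      unfolding INFM_nat
    proof
      fix m
      obtain k where "k > m + j" "t_tgt (r k) \<in> final A" using inf unfolding INFM_nat by blast
      then have "k + \<delta> > m" "t_tgt (r2 (k+\<delta>)) \<in> final A" by (auto simp: r2_def)
      then show "\<exists>k>m. t_tgt (r2 k) \<in> final A" by blast
    qed
  qed
  have let2: "\<forall>k. \<alpha>2 k \<in> alph A" using al by (simp add: \<alpha>2_def \<alpha>_def per_def)
  have "\<alpha>2 \<in> Lbal" using lang run2 acc2 let2 unfolding RPBA_lang_def by blast
  moreover have "\<alpha>2 \<notin> Lbal"
  proof
    assume "\<alpha>2 \<in> Lbal"
    then have l2: "\<forall>k. \<alpha>2 k \<in> {0,1}" and inf2: "\<exists>\<^sub>\<infinity>m. bal \<alpha>2 m" by (auto simp: Lbal_def)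
    have a0: "\<alpha> k = 0" if "i \<le> k" "k < j" for k
    proof -
      have "k = (k - s) + (n+1)*(2*N)" using that ij s_def by simp
      hence "k mod (2*N) = (k - s) mod (2*N)" by (metis mod_mult_self1)
      moreover have "k - s < N" using that ij by simp
      ultimately show ?thesis by (simp add: \<alpha>_def per_def)
    qed
    have Di: "DD \<alpha> (i + t) = DD \<alpha> i + int t" if "t \<le> \<delta>" for t
      using that
    proof (induction t)
      case 0 then show ?case by simp
    next
      case (Suc t)
      have "\<alpha> (i + t) = 0" using a0 Suc.prems \<delta>_def ij by simp
      then show ?case using Suc by (simp add: DD_Suc sgn01_def)
    qed
    have Dj: "DD \<alpha>2 m = DD \<alpha> (m - \<delta>) + int \<delta>" if "j \<le> m" for m
      using that
    proof (induction m rule: nat_induct_at_least)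
      case base
      have "DD \<alpha>2 j = DD \<alpha> j" unfolding DD_def by (auto simp: \<alpha>2_def intro: sum.cong)
      also have "\<dots> = DD \<alpha> i + int \<delta>" using Di[of \<delta>] ij \<delta>_def by simp
      finally show ?case using jd by simp
    next
      case (Suc m)
      have "DD \<alpha>2 (Suc m) = DD \<alpha>2 m + sgn01 (\<alpha>2 m)" by (rule DD_Suc)
      also have "\<dots> = DD \<alpha> (m - \<delta>) + int \<delta> + sgn01 (\<alpha> (m - \<delta>))" using Suc by (simp add: \<alpha>2_def)
      also have "\<dots> = DD \<alpha> (Suc m - \<delta>) + int \<delta>" using Suc jd by (simp add: Suc_diff_le DD_Suc)
      finally show ?case .
    qed
    obtain m where "m > j" "bal \<alpha>2 m" using inf2 unfolding INFM_nat by blast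
    then have "DD \<alpha>2 (Suc m) = 0" using bal_DD l2 by blast
    moreover have "DD \<alpha>2 (Suc m) \<ge> int \<delta>" using Dj[of "Suc m"] \<open>m>j\<close> DD_per_nonneg[OF N0] \<alpha>_def by simp
    ultimately show False using jd by simp
  qed
  ultimately show False by blast
qed

theorem lemma3:
  shows "\<exists>(\<Sigma>::nat set) L. finite \<Sigma> \<and> L \<subseteq> {\<alpha>. \<forall>i. \<alpha> i \<in> \<Sigma>}
           \<and> PPBA_recognizable \<Sigma> L \<and> \<not> RPBA_recognizable \<Sigma> L"
proof (intro exI conjI)
  show "finite {0,1::nat}" by simp
  show "Lbal \<subseteq> {\<alpha>. \<forall>i. \<alpha> i \<in> {0,1::nat}}" by (auto simp: Lbal_def)
  show "PPBA_recognizable {0,1::nat} Lbal" by (rule PPBA_rec)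
  show "\<not> RPBA_recognizable {0,1::nat} Lbal" by (rule not_RPBA)
qed

end
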